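(* Let \[ G(z)=\sum_{n=0}^{\infty}\binom{3n}{n}\frac{2z^n}{n+1}. \] Then for every complex $z$ with $|z|<4/27$, \[ G(z)=\frac{12\cos^2\alpha+6}{\left(4\cos^2\alpha-1\right)^2},\qquad \alpha=\frac{1}{3}\arcsin\left(\sqrt{27z/4}\right), \] where $\arcsin$ denotes the principal branch on the unit disc. The choice of square root does not matter, since $w\mapsto\cos\left(\tfrac13\arcsin w\right)$ is even. *)

theory Defs
  imports "HOL-Analysis.Analysis"
begin

end

theory Submission
  imports Defs
begin

lemma binom_rec: "2 * (n+1) * (2*n+1) * ((3*n+3) choose (n+1)) = 3 * (3*n+1) * (3*n+2) * ((3*n) choose n)"
proof -
  have e1: "(n+1) * ((3*n+3) choose (n+1)) = (3*n+3) * ((3*n+2) choose n)"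
    using binomial_absorption[of n "3*n+3"] by simp
  have e2: "(2*n+2) * ((3*n+2) choose n) = (3*n+2) * ((3*n+1) choose n)"
  proof -
    have "(3*n+2 - n) * ((3*n+2) choose n) = (3*n+2) * ((3*n+2-1) choose n)" by (rule binomial_absorb_comp)
    moreover have "3*n+2-n = 2*n+2" "3*n+2-1 = 3*n+1" by simp_all
    ultimately show ?thesis by metis
  qed
  have e3: "(2*n+1) * ((3*n+1) choose n) = (3*n+1) * ((3*n) choose n)"
  proof -
    have "(3*n+1 - n) * ((3*n+1) choose n) = (3*n+1) * ((3*n+1-1) choose n)" by (rule binomial_absorb_comp)
    moreover have "3*n+1-n = 2*n+1" "3*n+1-1 = 3*n" by simp_all
    ultimately show ?thesis by metis
  qed
  define X where "X = (3*n+3) choose (n+1)"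
  define Y where "Y = (3*n+2) choose n"
  define Z where "Z = (3*n+1) choose n"
  define W where "W = (3*n) choose n"
  have f1: "(n+1) * X = (3*n+3) * Y" using e1 X_def Y_def by simp
  have f2: "(2*n+2) * Y = (3*n+2) * Z" using e2 Y_def Z_def by simp
  have f3: "(2*n+1) * Z = (3*n+1) * W" using e3 W_def Z_def by simp
  have "(n+1) * (2 * (n+1) * (2*n+1) * X) = (n+1) * (3 * (3*n+1) * (3*n+2) * W)"
  proof -
    have "(n+1) * (2 * (n+1) * (2*n+1) * X) = 2*(n+1)*(2*n+1)*((n+1) * X)" by (simp only: mult_ac)
    also have "\<dots> = (3*n+3)*(2*n+1)*((2*n+2) * Y)" unfolding f1 by (simp add: algebra_simps)
    also have "\<dots> = (3*n+3)*(3*n+2)*((2*n+1) * Z)" unfolding f2 by (simp only: mult_ac)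
    also have "\<dots> = (3*n+3)*(3*n+2)*((3*n+1) * W)" by (simp only: f3)
    also have "\<dots> = (n+1) * (3 * (3*n+1) * (3*n+2) * W)" by (simp add: algebra_simps)
    finally show ?thesis .
  qed
  then have "2 * (n+1) * (2*n+1) * X = 3 * (3*n+1) * (3*n+2) * W" by (simp only: mult_cancel_left) simp
  then show ?thesis by (simp add: X_def W_def)
qed

lemma binom_bound: "real ((3*n) choose n) \<le> (27/4)^n"
proof -
  have "(1::real) = (1/3 + 2/3)^(3*n)" by simp
  also have "\<dots> = (\<Sum>k\<le>3*n. real ((3*n) choose k) * (1/3)^k * (2/3)^(3*n-k))"
    by (rule binomial_ring)
  also have "\<dots> \<ge> real ((3*n) choose n) * (1/3)^n * (2/3)^(3*n-n)"
    by (rule member_le_sum) auto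
  finally have "real ((3*n) choose n) * (1/3)^n * (2/3)^(2*n) \<le> 1" by simp
  moreover have "(1/3::real)^n * (2/3)^(2*n) = (4/27)^n"
  proof -
    have "(2/3::real)^(2*n) = ((2/3)^2)^n" by (simp add: power_mult)
    also have "\<dots> = (4/9)^n" by (simp add: power2_eq_square)
    finally show ?thesis by (simp add: power_mult_distrib[symmetric])
  qed
  ultimately have "real ((3*n) choose n) * (4/27)^n \<le> 1" by (simp add: mult.assoc)
  then have "real ((3*n) choose n) * (4/27)^n * (27/4)^n \<le> (27/4)^n" by simp
  moreover have "(4/27::real)^n * (27/4)^n = 1" by (simp add: power_mult_distrib[symmetric])
  ultimately show ?thesis by (simp add: mult.assoc)
qed

definition dd :: "nat \<Rightarrow> complex" where "dd n = of_nat ((3*n) choose n)"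
definition hh :: "nat \<Rightarrow> complex" where "hh n = - dd n / (9 * (2 * of_nat n + 1))"
definition tt :: "nat \<Rightarrow> complex" where "tt n = (case n of 0 \<Rightarrow> 0 | Suc m \<Rightarrow> 2 * dd m / of_nat (Suc m))"
definition PS :: "(nat \<Rightarrow> complex) \<Rightarrow> complex \<Rightarrow> complex" where "PS c x = (\<Sum>n. c n * x^n)"

lemma norm_dd: "norm (dd n) \<le> (27/4)^n"
  using binom_bound[of n] by (simp add: dd_def)

lemma norm_dd2: "norm (dd n) \<le> 2 * (27/4)^n"
  using norm_dd[of n] zero_le_power[of "27/4::real" n] by linarith

lemma norm_hh: "norm (hh n) \<le> 2 * (27/4)^n"
proof -
  have "norm (9 * (2 * of_nat n + 1) :: complex) = 9 * (2 * real n + 1)"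
  proof -
    have "(9 * (2 * of_nat n + 1) :: complex) = of_nat (9 * (2 * n + 1))" by simp
    then show ?thesis by (simp only: norm_of_nat) simp
  qed
  then have "norm (hh n) = norm (dd n) / (9 * (2 * real n + 1))"
    by (simp add: hh_def norm_divide)
  also have "\<dots> \<le> norm (dd n)"
  proof -
    have "norm (dd n) * 1 \<le> norm (dd n) * (9 * (2 * real n + 1))" by (rule mult_left_mono) auto
    then show ?thesis by (simp add: divide_le_eq)
  qed
  finally show ?thesis using norm_dd2[of n] by linarith
qed

lemma norm_tt: "norm (tt n) \<le> 2 * (27/4)^n"
proof (cases n)
  case 0 then show ?thesis by (simp add: tt_def)
next
  case (Suc m)
  have "norm (tt n) = 2 * norm (dd m) / real (Suc m)"
    using Suc by (simp add: tt_def norm_divide norm_mult del: of_nat_Suc)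
  also have "\<dots> \<le> 2 * norm (dd m)"
  proof -
    have "norm (dd m) * 1 \<le> norm (dd m) * real (Suc m)" by (rule mult_left_mono) auto
    then show ?thesis by (simp add: divide_le_eq del: of_nat_Suc)
  qed
  also have "\<dots> \<le> 2 * (27/4)^m" using norm_dd[of m] by simp
  also have "\<dots> \<le> 2 * (27/4)^n" using Suc by simp
  finally show ?thesis .
qed

lemma summable_bnd:
  fixes c :: "nat \<Rightarrow> complex" and x :: complex
  assumes "\<And>n. norm (c n) \<le> 2 * (27/4)^n" "norm x < 4/27"
  shows "summable (\<lambda>n. c n * x^n)"
proof (rule summable_comparison_test)
  show "\<exists>N. \<forall>n\<ge>N. norm (c n * x^n) \<le> 2 * (27/4 * norm x)^n"
  proof (intro exI allI impI)
    fix n :: nat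
    have "norm (c n * x^n) = norm (c n) * norm x ^ n" by (simp add: norm_mult norm_power)
    also have "\<dots> \<le> 2 * (27/4)^n * norm x ^ n" by (rule mult_right_mono[OF assms(1)]) simp
    also have "\<dots> = 2 * (27/4 * norm x)^n" by (simp only: power_mult_distrib mult.assoc)
    finally show "norm (c n * x^n) \<le> 2 * (27/4 * norm x)^n" .
  qed
  have "norm (27/4 * norm x) < 1" using assms(2) by simp
  then show "summable (\<lambda>n. 2 * (27/4 * norm x)^n)"
    by (intro summable_mult summable_geometric)
qed

lemma PS_deriv:
  fixes c :: "nat \<Rightarrow> complex" and x :: complex
  assumes "\<And>n. norm (c n) \<le> 2 * (27/4)^n" "norm x < 4/27"
  shows "(PS c has_field_derivative PS (diffs c) x) (at x)"
  unfolding PS_def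
  by (rule termdiffs_strong'[OF summable_bnd[OF assms(1)] assms(2)])

lemma summable_diffs:
  fixes c :: "nat \<Rightarrow> complex" and x :: complex
  assumes "\<And>n. norm (c n) \<le> 2 * (27/4)^n" "norm x < 4/27"
  shows "summable (\<lambda>n. diffs c n * x^n)"
  by (rule termdiff_converges[OF assms(2) summable_bnd[OF assms(1)]])

lemma shift_sums:
  fixes c :: "nat \<Rightarrow> complex" and x :: complex
  assumes "summable (\<lambda>n. diffs c n * x^n)"
  shows "(\<lambda>n. of_nat n * c n * x^n) sums (x * PS (diffs c) x)"
proof -
  have "(\<lambda>n. x * (diffs c n * x^n)) sums (x * PS (diffs c) x)"
    unfolding PS_def by (rule sums_mult[OF summable_sums[OF assms]])
  then have "(\<lambda>n. (\<lambda>n. of_nat n * c n * x^n) (Suc n)) sums (x * PS (diffs c) x)"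
    by (simp add: diffs_def ac_simps)
  then show ?thesis by (subst (asm) sums_Suc_iff) simp
qed

lemma coeffI: "(8/27) * diffs dd n - (2 * of_nat n + 1) * dd n = hh n"
proof -
  have r: "2 * (of_nat n+1) * (2 * of_nat n+1) * dd (Suc n) = 3 * (3 * of_nat n+1) * (3 * of_nat n+2) * (dd n :: complex)"
  proof -
    have "(of_nat (2 * (n+1) * (2*n+1) * ((3*n+3) choose (n+1))) :: complex) = of_nat (3 * (3*n+1) * (3*n+2) * ((3*n) choose n))"
      by (simp only: binom_rec)
    then have "2 * (of_nat n+1) * (2 * of_nat n+1) * of_nat ((3*n+3) choose (n+1)) = 3 * (3 * of_nat n+1) * (3 * of_nat n+2) * (of_nat ((3*n) choose n) :: complex)"
      by (simp only: of_nat_mult of_nat_add of_nat_numeral of_nat_1)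
    moreover have "dd (Suc n) = of_nat ((3*n+3) choose (n+1))" unfolding dd_def by (simp add: add.commute)
    ultimately show ?thesis by (simp only: dd_def)
  qed
  have ne: "(2 * of_nat n + 1 :: complex) \<noteq> 0"
    by (metis of_nat_Suc of_nat_mult of_nat_numeral add.commute old.nat.distinct(2) of_nat_eq_0_iff)
  have "diffs dd n = (of_nat n + 1) * dd (Suc n)" by (simp add: diffs_def)
  then have "(2 * of_nat n + 1) * (2 * diffs dd n) = 3 * (3 * of_nat n+1) * (3 * of_nat n+2) * dd n"
    using r by (simp add: algebra_simps)
  have "9 * (2 * of_nat n+1) * ((8/27) * diffs dd n - (2 * of_nat n+1)*dd n) = (4/3) * ((2 * of_nat n+1)*(2*diffs dd n)) - 9*(2 * of_nat n+1)^2 * dd n"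
    by (simp add: algebra_simps power2_eq_square)
  also have "\<dots> = (4/3)*(3 * (3 * of_nat n+1) * (3 * of_nat n+2) * dd n) - 9*(2 * of_nat n+1)^2 * dd n"
    by (simp only: \<open>(2 * of_nat n + 1) * (2 * diffs dd n) = 3 * (3 * of_nat n+1) * (3 * of_nat n+2) * dd n\<close>)
  also have "\<dots> = - dd n" by (simp add: algebra_simps power2_eq_square)
  finally have X: "((8/27) * diffs dd n - (2 * of_nat n+1)*dd n) * (9 * (2 * of_nat n+1)) = - dd n"
    by (simp add: mult.commute)
  have ne2: "(9 * (2 * of_nat n+1) :: complex) \<noteq> 0" using ne by (simp only: mult_eq_0_iff) simp
  show ?thesis unfolding hh_def by (metis X ne2 nonzero_eq_divide_eq minus_divide_left)
qed

lemma coeffII: "hh n * (1 + 2 * of_nat n) = - dd n / 9"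
proof -
  have ne: "(2 * of_nat n + 1 :: complex) \<noteq> 0"
    by (metis of_nat_Suc of_nat_mult of_nat_numeral add.commute old.nat.distinct(2) of_nat_eq_0_iff)
  have ne9: "(9 + of_nat n * 18 :: complex) \<noteq> 0"
    using of_nat_eq_0_iff[of "9 + n*18", where 'a=complex] by simp
  then show ?thesis using ne unfolding hh_def by (simp add: divide_simps) (simp add: algebra_simps)
qed

lemma coeffIII: "diffs tt n = 2 * dd n"
  by (simp add: diffs_def tt_def del: of_nat_Suc)

lemma PS_sums:
  assumes "\<And>n. norm (c n) \<le> 2 * (27/4)^n" "norm x < 4/27"
  shows "(\<lambda>n. c n * x^n) sums PS c x"
  unfolding PS_def by (rule summable_sums[OF summable_bnd[OF assms]])

lemma PS_diffs_sums:
  assumes "\<And>n. norm (c n) \<le> 2 * (27/4)^n" "norm x < 4/27"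
  shows "(\<lambda>n. diffs c n * x^n) sums PS (diffs c) x"
  unfolding PS_def by (rule summable_sums[OF summable_diffs[OF assms]])

lemma E1:
  assumes "norm x < 4/27"
  shows "PS hh x = (8/27 - 2*x) * PS (diffs dd) x - PS dd x"
proof -
  have S0: "(\<lambda>n. dd n * x^n) sums PS dd x" by (rule PS_sums[OF norm_dd2 assms])
  have S1: "(\<lambda>n. diffs dd n * x^n) sums PS (diffs dd) x" by (rule PS_diffs_sums[OF norm_dd2 assms])
  have S2: "(\<lambda>n. of_nat n * dd n * x^n) sums (x * PS (diffs dd) x)"
    by (rule shift_sums[OF summable_diffs[OF norm_dd2 assms]])
  have "(\<lambda>n. (8/27) * (diffs dd n * x^n) - 2 * (of_nat n * dd n * x^n) - dd n * x^n) sums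
        ((8/27) * PS (diffs dd) x - 2 * (x * PS (diffs dd) x) - PS dd x)"
    by (intro sums_diff sums_mult S0 S1 S2)
  moreover have "(\<lambda>n. (8/27) * (diffs dd n * x^n) - 2 * (of_nat n * dd n * x^n) - dd n * x^n) = (\<lambda>n. hh n * x^n)"
  proof
    fix n
    show "(8/27) * (diffs dd n * x^n) - 2 * (of_nat n * dd n * x^n) - dd n * x^n = hh n * x^n"
      using coeffI[of n] by (simp add: algebra_simps)
  qed
  ultimately have "(\<lambda>n. hh n * x^n) sums ((8/27) * PS (diffs dd) x - 2 * (x * PS (diffs dd) x) - PS dd x)" by simp
  moreover have "(\<lambda>n. hh n * x^n) sums PS hh x" by (rule PS_sums[OF norm_hh assms])
  ultimately have "(8/27) * PS (diffs dd) x - 2 * (x * PS (diffs dd) x) - PS dd x = PS hh x" by (rule sums_unique2)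
  then show ?thesis by (simp add: algebra_simps)
qed

lemma E2:
  assumes "norm x < 4/27"
  shows "PS hh x + 2 * x * PS (diffs hh) x = - PS dd x / 9"
proof -
  have S0: "(\<lambda>n. hh n * x^n) sums PS hh x" by (rule PS_sums[OF norm_hh assms])
  have S2: "(\<lambda>n. of_nat n * hh n * x^n) sums (x * PS (diffs hh) x)"
    by (rule shift_sums[OF summable_diffs[OF norm_hh assms]])
  have "(\<lambda>n. hh n * x^n + 2 * (of_nat n * hh n * x^n)) sums (PS hh x + 2 * (x * PS (diffs hh) x))"
    by (intro sums_add sums_mult S0 S2)
  moreover have "(\<lambda>n. hh n * x^n + 2 * (of_nat n * hh n * x^n)) = (\<lambda>n. (- 1/9) * (dd n * x^n))"
  proof
    fix n
    have "hh n * x^n + 2 * (of_nat n * hh n * x^n) = (hh n * (1 + 2 * of_nat n)) * x^n" by (simp add: algebra_simps)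
    also have "\<dots> = (- 1/9) * (dd n * x^n)" by (simp add: coeffII)
    finally show "hh n * x^n + 2 * (of_nat n * hh n * x^n) = (- 1/9) * (dd n * x^n)" .
  qed
  ultimately have "(\<lambda>n. (- 1/9) * (dd n * x^n)) sums (PS hh x + 2 * (x * PS (diffs hh) x))" by simp
  moreover have "(\<lambda>n. (- 1/9) * (dd n * x^n)) sums ((- 1/9) * PS dd x)" by (intro sums_mult PS_sums[OF norm_dd2 assms])
  ultimately have "PS hh x + 2 * (x * PS (diffs hh) x) = (- 1/9) * PS dd x" by (rule sums_unique2)
  then show ?thesis by (simp add: algebra_simps)
qed

lemma E3:
  assumes "norm x < 4/27"
  shows "PS (diffs tt) x = 2 * PS dd x"
proof -
  have "(\<lambda>n. 2 * (dd n * x^n)) sums (2 * PS dd x)" by (intro sums_mult PS_sums[OF norm_dd2 assms])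
  then have "(\<lambda>n. diffs tt n * x^n) sums (2 * PS dd x)" by (simp add: coeffIII mult.assoc)
  then show ?thesis using PS_diffs_sums[OF norm_tt assms] sums_unique2 by blast
qed

definition zt :: "complex \<Rightarrow> complex" where "zt x = 4 * (sin x)^2 / 27"

lemma zt_norm: "norm (sin x) < 1 \<Longrightarrow> norm (zt x) < 4/27"
proof -
  assume a: "norm (sin x) < 1"
  have "norm (zt x) = 4 * norm (sin x)^2 / 27" by (simp add: zt_def norm_divide norm_mult norm_power)
  also have "norm (sin x)^2 < 1" using a by (simp add: power_less_one_iff)
  then have "4 * norm (sin x)^2 / 27 < 4/27" by simp
  finally show ?thesis .
qed

lemma zt_deriv: "(zt has_field_derivative (8/27 * sin x * cos x)) (at x)"
  unfolding zt_def by (auto intro!: derivative_eq_intros simp: power2_eq_square)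

lemma PSzt_deriv:
  assumes "\<And>n. norm (c n) \<le> 2 * (27/4)^n" "norm (sin x) < 1"
  shows "((\<lambda>x. PS c (zt x)) has_field_derivative (PS (diffs c) (zt x) * (8/27 * sin x * cos x))) (at x)"
  by (rule DERIV_chain2[OF PS_deriv[OF assms(1) zt_norm[OF assms(2)]] zt_deriv])

definition yy :: "complex \<Rightarrow> complex" where "yy x = PS dd (zt x) * cos x"
definition qq :: "complex \<Rightarrow> complex" where "qq x = sin x * PS hh (zt x)"

lemma yy_deriv:
  assumes "norm (sin x) < 1"
  shows "(yy has_field_derivative qq x) (at x)"
proof -
  have "(yy has_field_derivative (PS (diffs dd) (zt x) * (8/27 * sin x * cos x)) * cos x + (- sin x) * PS dd (zt x)) (at x)"
    unfolding yy_def by (rule DERIV_mult[OF PSzt_deriv[OF norm_dd2 assms] DERIV_cos])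
  moreover have "(PS (diffs dd) (zt x) * (8/27 * sin x * cos x)) * cos x + (- sin x) * PS dd (zt x) = qq x"
  proof -
    have c2: "(cos x)^2 = 1 - (sin x)^2" by (simp add: cos_squared_eq)
    have "qq x = sin x * ((8/27 - 2 * zt x) * PS (diffs dd) (zt x) - PS dd (zt x))"
      by (simp add: qq_def E1[OF zt_norm[OF assms]])
    also have "\<dots> = sin x * ((8/27 * (cos x)^2) * PS (diffs dd) (zt x) - PS dd (zt x))"
      by (simp add: c2 zt_def algebra_simps)
    finally show ?thesis by (simp add: algebra_simps power2_eq_square)
  qed
  ultimately show ?thesis by simp
qed

lemma qq_deriv:
  assumes "norm (sin x) < 1"
  shows "(qq has_field_derivative (- yy x / 9)) (at x)"
proof -
  have "(qq has_field_derivative cos x * PS hh (zt x) + (PS (diffs hh) (zt x) * (8/27 * sin x * cos x)) * sin x) (at x)"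
    unfolding qq_def by (rule DERIV_mult[OF DERIV_sin PSzt_deriv[OF norm_hh assms]])
  moreover have "cos x * PS hh (zt x) + (PS (diffs hh) (zt x) * (8/27 * sin x * cos x)) * sin x = - yy x / 9"
  proof -
    have "cos x * PS hh (zt x) + (PS (diffs hh) (zt x) * (8/27 * sin x * cos x)) * sin x
       = cos x * (PS hh (zt x) + 2 * zt x * PS (diffs hh) (zt x))"
      by (simp add: zt_def algebra_simps power2_eq_square)
    also have "\<dots> = - yy x / 9" by (simp add: E2[OF zt_norm[OF assms]] yy_def)
    finally show ?thesis .
  qed
  ultimately show ?thesis by simp
qed

lemma ds3: "((\<lambda>x::complex. sin (x/3) / 3) has_field_derivative cos (x/3) / 9) (at x)"
  by (auto intro!: derivative_eq_intros)

lemma dc3: "((\<lambda>x::complex. cos (x/3) / 3) has_field_derivative - sin (x/3) / 9) (at x)"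
  by (auto intro!: derivative_eq_intros)

lemma ds3': "((\<lambda>x::complex. sin (x/3)) has_field_derivative cos (x/3) / 3) (at x)"
  by (auto intro!: derivative_eq_intros)

lemma dc3': "((\<lambda>x::complex. cos (x/3)) has_field_derivative - sin (x/3) / 3) (at x)"
  by (auto intro!: derivative_eq_intros)

lemma const_on:
  assumes "convex S" "0 \<in> S" "x \<in> S" "\<And>v. v \<in> S \<Longrightarrow> (f has_field_derivative 0) (at v)"
  shows "f x = (f 0 :: complex)"
proof -
  obtain c where "\<forall>v\<in>S. f v = c"
    using has_field_derivative_zero_constant[OF assms(1), of f] assms(4) has_field_derivative_at_within by blast
  then show ?thesis using assms(2,3) by simp
qed

lemma PS_0: "PS c 0 = c 0"
  unfolding PS_def by simp

lemma yy_cos: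
  assumes "convex S" "0 \<in> S" "\<And>v. v \<in> S \<Longrightarrow> norm (sin v) < 1" "x \<in> S"
  shows "yy x = cos (x/3)"
proof -
  define A where "A x = yy x * (sin (x/3) / 3) + qq x * cos (x/3)" for x
  define C where "C x = yy x * (cos (x/3) / 3) - qq x * sin (x/3)" for x
  have dA: "(A has_field_derivative 0) (at v)" if v: "v \<in> S" for v
  proof -
    have "(A has_field_derivative (qq v * (sin (v/3) / 3) + cos (v/3) / 9 * yy v) + ((- yy v / 9) * cos (v/3) + (- sin (v/3) / 3) * qq v)) (at v)"
      unfolding A_def by (intro DERIV_add DERIV_mult yy_deriv qq_deriv assms(3)[OF v] ds3 dc3')
    then show ?thesis by (rule DERIV_cong) (simp add: algebra_simps)
  qed
  have dC: "(C has_field_derivative 0) (at v)" if v: "v \<in> S" for v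
  proof -
    have "(C has_field_derivative (qq v * (cos (v/3) / 3) + (- sin (v/3) / 9) * yy v) - ((- yy v / 9) * sin (v/3) + (cos (v/3) / 3) * qq v)) (at v)"
      unfolding C_def by (intro DERIV_diff DERIV_mult yy_deriv qq_deriv assms(3)[OF v] dc3 ds3')
    then show ?thesis by (rule DERIV_cong) (simp add: algebra_simps)
  qed
  have A0: "A 0 = 0" by (simp add: A_def qq_def)
  have C0: "C 0 = 1/3" by (simp add: C_def yy_def zt_def PS_0 dd_def qq_def)
  have hA: "A x = 0" using const_on[OF assms(1,2,4), of A] dA A0 by simp
  have hC: "C x = 1/3" using const_on[OF assms(1,2,4), of C] dC C0 by simp
  have h3: "A x * sin (x/3) + C x * cos (x/3) = yy x / 3"
  proof -
    have "A x * sin (x/3) + C x * cos (x/3) = yy x / 3 * (cos (x/3) * cos (x/3) + sin (x/3) * sin (x/3))"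
    proof -
      have gen: "(y * (s / 3) + q * c) * s + (y * (c / 3) - q * s) * c = y / 3 * (c * c + s * s)" for y q s c :: complex
        by (simp add: algebra_simps)
      show ?thesis unfolding A_def C_def by (rule gen)
    qed
    also have "cos (x/3) * cos (x/3) + sin (x/3) * sin (x/3) = 1" by (rule sin_cos_squared_add3)
    finally show ?thesis by simp
  qed
  from h3[unfolded hA hC] show ?thesis by simp
qed

definition FF :: "complex \<Rightarrow> complex" where "FF x = 2/9 * (1 - cos (4*x/3)) + 4/9 * (1 - cos (2*x/3))"

lemma FF_deriv: "(FF has_field_derivative (8/27 * sin (4*x/3) + 8/27 * sin (2*x/3))) (at x)"
  unfolding FF_def by (auto intro!: derivative_eq_intros)

lemma trig1: "sin (4*x/3) + sin (2*x/3) = 2 * sin x * cos (x/3 :: complex)"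
proof -
  have "4*x/3 = x + x/3" "2*x/3 = x - x/3" by (simp_all add: field_simps)
  then have "sin (4*x/3) + sin (2*x/3) = sin (x + x/3) + sin (x - x/3)" by simp
  also have "\<dots> = 2 * sin x * cos (x/3)" by (simp only: sin_add sin_diff) simp
  finally show ?thesis .
qed

lemma T_val:
  assumes "convex S" "0 \<in> S" "\<And>v. v \<in> S \<Longrightarrow> norm (sin v) < 1" "x \<in> S"
  shows "PS tt (zt x) = FF x"
proof -
  define V where "V x = PS tt (zt x) - FF x" for x
  have dV: "(V has_field_derivative 0) (at v)" if v: "v \<in> S" for v
  proof -
    have h1: "(V has_field_derivative ((PS (diffs tt) (zt v) * (8/27 * sin v * cos v)) - (8/27 * sin (4 * v / 3) + 8/27 * sin (2 * v / 3)))) (at v)"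
      unfolding V_def by (intro DERIV_diff PSzt_deriv norm_tt assms(3)[OF v] FF_deriv)
    have h2: "PS (diffs tt) (zt v) * (8/27 * sin v * cos v) = 16/27 * sin v * yy v"
      by (simp add: E3[OF zt_norm[OF assms(3)[OF v]]] yy_def)
    have h3: "yy v = cos (v/3)" by (rule yy_cos[OF assms(1,2,3) v])
    have h4: "8/27 * sin (4 * v / 3) + 8/27 * sin (2 * v / 3) = 16/27 * sin v * cos (v/3)"
    proof -
      have "8/27 * sin (4 * v / 3) + 8/27 * sin (2 * v / 3) = 8/27 * (sin (4 * v / 3) + sin (2 * v / 3))"
        by (simp only: distrib_left)
      also have "\<dots> = 8/27 * (2 * sin v * cos (v/3))" by (simp only: trig1)
      finally show ?thesis by simp
    qed
    from h1 have "(V has_field_derivative (16/27 * sin v * yy v - 16/27 * sin v * cos (v/3))) (at v)"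
      by (simp only: h2 h4)
    then show ?thesis by (simp add: h3)
  qed
  have "V x = V 0" using const_on[OF assms(1,2,4), of V] dV by simp
  also have "V 0 = 0" by (simp add: V_def FF_def zt_def PS_0 tt_def)
  finally show ?thesis by (simp add: V_def)
qed

lemma cosh_mono_abs: "\<bar>s\<bar> \<le> \<bar>t\<bar> \<Longrightarrow> exp s + inverse (exp s) \<le> exp t + inverse (exp (t::real))"
proof -
  assume a: "\<bar>s\<bar> \<le> \<bar>t\<bar>"
  have e: "exp x + inverse (exp x) = 2 * cosh x" for x :: real by (simp add: cosh_def exp_minus)
  have "cosh s = cosh \<bar>s\<bar>" by simp
  also have "\<dots> \<le> cosh \<bar>t\<bar>" using a by (subst cosh_real_nonneg_le_iff) auto
  also have "\<dots> = cosh t" by simp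
  finally show ?thesis unfolding e by simp
qed

lemma seg_sin:
  assumes "norm w < 1" "v \<in> closed_segment 0 (Arcsin w)"
  shows "norm (sin v) < 1"
proof -
  obtain u where u: "0 \<le> u" "u \<le> 1" "v = u *\<^sub>R Arcsin w"
    using assms(2) by (auto simp: closed_segment_def)
  define a where "a = Re (Arcsin w)"
  define b where "b = Im (Arcsin w)"
  have "\<bar>Re w\<bar> < 1" using abs_Re_le_cmod[of w] assms(1) by linarith
  then have ha: "\<bar>a\<bar> < pi/2" unfolding a_def by (rule Arcsin_bounds)
  have rv: "Re v = u * a" "Im v = u * b" using u by (simp_all add: a_def b_def)
  have c1: "cos (2 * a) \<le> cos (2 * (u * a))"
  proof -
    have "cos \<bar>2 * a\<bar> \<le> cos \<bar>2 * (u * a)\<bar>"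
    proof (rule cos_monotone_0_pi_le)
      show "0 \<le> \<bar>2 * (u * a)\<bar>" by simp
      have "\<bar>u * a\<bar> \<le> \<bar>a\<bar>" using u by (simp add: abs_mult mult_left_le_one_le)
      then show "\<bar>2 * (u * a)\<bar> \<le> \<bar>2 * a\<bar>" by simp
      show "\<bar>2 * a\<bar> \<le> pi" using ha by simp
    qed
    then show ?thesis by simp
  qed
  have c2: "exp (2 * (u * b)) + inverse (exp (2 * (u * b))) \<le> exp (2 * b) + inverse (exp (2 * b))"
  proof (rule cosh_mono_abs)
    have "\<bar>u * b\<bar> \<le> \<bar>b\<bar>" using u by (simp add: abs_mult mult_left_le_one_le)
    then show "\<bar>2 * (u * b)\<bar> \<le> \<bar>2 * b\<bar>" by simp
  qed
  have "norm (sin v)^2 = (exp (2 * (u * b)) + inverse (exp (2 * (u * b))) - 2 * cos (2 * (u * a))) / 4"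
    by (simp add: norm_sin_squared rv)
  also have "\<dots> \<le> (exp (2 * b) + inverse (exp (2 * b)) - 2 * cos (2 * a)) / 4"
    using c1 c2 by simp
  also have "\<dots> = norm (sin (Arcsin w))^2" by (simp only: norm_sin_squared[of "Arcsin w"] a_def b_def)
  also have "\<dots> = norm w ^ 2" by simp
  also have "\<dots> < 1" using assms(1) by (simp add: power_less_one_iff)
  finally have "norm (sin v)^2 < 1" .
  then show ?thesis by (simp add: power_less_one_iff)
qed

theorem mainTheorem1:
  fixes z :: complex
  assumes "norm z < 4/27"
  defines "\<alpha> \<equiv> Arcsin (csqrt (27 * z / 4)) / 3"
  shows "(\<lambda>n. of_nat ((3*n) choose n) * (2 * z ^ n) / of_nat (n + 1))
           sums ((12 * (cos \<alpha>)\<^sup>2 + 6) / (4 * (cos \<alpha>)\<^sup>2 - 1)\<^sup>2)"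
proof (cases "z = 0")
  case True
  then have "\<alpha> = 0" by (simp add: \<alpha>_def)
  then have r: "(12 * (cos \<alpha>)\<^sup>2 + 6) / (4 * (cos \<alpha>)\<^sup>2 - 1)\<^sup>2 = 2" by simp
  have eq: "(\<lambda>n. of_nat ((3*n) choose n) * (2 * z ^ n) / of_nat (n + 1)) = (\<lambda>n. if n = 0 then 2 else 0 :: complex)"
    using True by (auto simp: fun_eq_iff)
  show ?thesis unfolding r eq using sums_single[of 0 "\<lambda>_. (2::complex)"] by simp
next
  case False
  define w where "w = csqrt (27 * z / 4)"
  define x0 where "x0 = Arcsin w"
  have nw: "norm w < 1"
  proof -
    have "norm (27 * z / 4) < 1" using assms(1) by (simp add: norm_divide norm_mult)
    then show ?thesis unfolding w_def by (simp add: norm_csqrt)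
  qed
  define S where "S = closed_segment 0 x0"
  have S: "convex S" "0 \<in> S" "x0 \<in> S" "\<And>v. v \<in> S \<Longrightarrow> norm (sin v) < 1"
    unfolding S_def x0_def using seg_sin[OF nw] by auto
  have zt0: "zt x0 = z" unfolding zt_def x0_def w_def by simp
  have T: "PS tt z = FF x0" using T_val[OF S(1,2,4) S(3)] zt0 by simp
  have "(\<lambda>n. tt n * z^n) sums PS tt z" by (rule PS_sums[OF norm_tt assms(1)])
  then have "(\<lambda>n. tt (Suc n) * z^(Suc n)) sums PS tt z" by (subst sums_Suc_iff) (simp add: tt_def)
  moreover have "(\<lambda>n. tt (Suc n) * z^(Suc n)) = (\<lambda>n. z * (of_nat ((3*n) choose n) * (2 * z ^ n) / of_nat (n + 1)))"
    by (auto simp: fun_eq_iff tt_def dd_def)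
  ultimately have "(\<lambda>n. z * (of_nat ((3*n) choose n) * (2 * z ^ n) / of_nat (n + 1))) sums PS tt z" by simp
  then have "(\<lambda>n. inverse z * (z * (of_nat ((3*n) choose n) * (2 * z ^ n) / of_nat (n + 1)))) sums (inverse z * PS tt z)"
    by (rule sums_mult)
  then have G: "(\<lambda>n. of_nat ((3*n) choose n) * (2 * z ^ n) / of_nat (n + 1)) sums (FF x0 / z)"
    using False T by (simp add: field_simps)
  have x0a: "x0 = 3 * \<alpha>" unfolding x0_def w_def \<alpha>_def by simp
  define c where "c = cos \<alpha>"
  define s where "s = sin \<alpha>"
  have sc: "s^2 = 1 - c^2" unfolding s_def c_def by (simp add: sin_squared_eq)
  have c2: "cos (2 * \<alpha>) = 2 * c^2 - 1" unfolding c_def by (rule cos_double_cos)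
  have c4: "cos (4 * \<alpha>) = 2 * (2 * c^2 - 1)^2 - 1"
  proof -
    have "cos (4 * \<alpha>) = cos (2 * (2 * \<alpha>))" by simp
    also have "\<dots> = 2 * (cos (2 * \<alpha>))^2 - 1" by (rule cos_double_cos)
    finally show ?thesis using c2 by simp
  qed
  have s3: "sin (3 * \<alpha>) = s * (4 * c^2 - 1)"
  proof -
    have "sin (3 * \<alpha>) = sin (2 * \<alpha> + \<alpha>)" by (simp add: algebra_simps)
    also have "\<dots> = sin (2 * \<alpha>) * c + cos (2 * \<alpha>) * s" by (simp only: sin_add c_def s_def)
    also have "\<dots> = s * (4 * c^2 - 1)" unfolding sin_double c2 c_def[symmetric] s_def[symmetric] by (simp add: algebra_simps power2_eq_square)
    finally show ?thesis .
  qed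
  have zc: "z = 4 * (1 - c^2) * (4 * c^2 - 1)^2 / 27"
  proof -
    have "z = 4 * (sin x0)^2 / 27" using zt0 by (simp add: zt_def)
    also have "\<dots> = 4 * s^2 * (4 * c^2 - 1)^2 / 27" by (simp add: x0a s3 power_mult_distrib)
    finally show ?thesis by (simp add: sc)
  qed
  have n1: "1 - c^2 \<noteq> 0" and n2: "4 * c^2 - 1 \<noteq> 0" using False zc by auto
  have FFc: "FF x0 = 2/9 * (1 - (2 * (2 * c^2 - 1)^2 - 1)) + 4/9 * (1 - (2 * c^2 - 1))"
  proof -
    have "4 * x0 / 3 = 4 * \<alpha>" "2 * x0 / 3 = 2 * \<alpha>" by (simp_all add: x0a)
    then show ?thesis unfolding FF_def using c2 c4 by simp
  qed
  have "FF x0 / z = (12 * c^2 + 6) / (4 * c^2 - 1)^2"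
    unfolding FFc zc using n1 n2 by (simp add: field_simps) (simp add: algebra_simps eval_nat_numeral)
  then show ?thesis using G by (simp add: c_def)
qed

end
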